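(* Assume $0<A,B\le1$ and $B\ge B_0(A)$, and let $U$ satisfy $G_{A,B}(U)=0$ and $L(A,B)\le U\le R(A,B)$. Then \[ (A+B)(1-U)+B\kappa M(U)+A\varepsilon N(U)\ge\tfrac12\sqrt{2(1+AB)} \] and \[ (A+B)U+B\kappa M(U)+A\varepsilon N(U)\ge\tfrac12\sqrt{2(1+AB)} . \]
   Context: For $0<A,B\le1$ put $\kappa=\sqrt{1-A^2}$, $\varepsilon=\sqrt{1-B^2}$, $P=P(A,B)=\frac{1+AB}{B(A+B)}$, $M(U)=\kappa(P-U)$, $N(U)=\varepsilon\left(U+\frac{\kappa^2}{A(A+B)}\right)$, and $G_{A,B}(U)=B\cos(\pi M(U))-A\cos(\pi N(U))-(A+B)\cos(\pi U)$. Further $L(A,B)=\frac{\kappa}{1+\kappa}\frac{1+AB}{B(A+B)}$, $R(A,B)=\frac{1-\varepsilon\kappa^2/[A(A+B)]}{1+\varepsilon}$, and $B_0(A)=\frac{-A(1-\kappa)+\sqrt{A^2(1-\kappa)^2+8\kappa(1+\kappa)}}{2(1+\kappa)}$. *)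

theory Defs
  imports Complex_Main
begin

definition kap :: "real \<Rightarrow> real" where "kap A = sqrt (1 - A^2)"
definition eps :: "real \<Rightarrow> real" where "eps B = sqrt (1 - B^2)"
definition PP :: "real \<Rightarrow> real \<Rightarrow> real" where
  "PP A B = (1 + A*B) / (B*(A+B))"
definition MM :: "real \<Rightarrow> real \<Rightarrow> real \<Rightarrow> real" where
  "MM A B U = kap A * (PP A B - U)"
definition NN :: "real \<Rightarrow> real \<Rightarrow> real \<Rightarrow> real" where
  "NN A B U = eps B * (U + (kap A)^2 / (A*(A+B)))"
definition GG :: "real \<Rightarrow> real \<Rightarrow> real \<Rightarrow> real" where
  "GG A B U = B * cos (pi * MM A B U) - A * cos (pi * NN A B U) - (A+B) * cos (pi * U)"
definition LL :: "real \<Rightarrow> real \<Rightarrow> real" where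
  "LL A B = kap A / (1 + kap A) * ((1 + A*B) / (B*(A+B)))"
definition RR :: "real \<Rightarrow> real \<Rightarrow> real" where
  "RR A B = (1 - eps B * (kap A)^2 / (A*(A+B))) / (1 + eps B)"
definition B0 :: "real \<Rightarrow> real" where
  "B0 A = (- A * (1 - kap A) + sqrt (A^2 * (1 - kap A)^2 + 8 * kap A * (1 + kap A))) / (2 * (1 + kap A))"

end

theory Submission imports Defs "HOL-Analysis.Analysis" begin
lemma scale_aux: "(c*l)*w - 4*d*(c*k) = (c::real)*(l*w - 4*d*k)" by (simp add: algebra_simps)

lemma poly_P1_exp:
  fixes A B :: real
  assumes "0 \<le> A" "A \<le> 1" "0 \<le> B" "B \<le> 1"
  shows "0 \<le> 98800 - 74100*B - 89536*B^2 + 52101*B^3 + 20068*B^4 - 74100*A + 245768*A*B - 46237*A*B^2 - 187960*A*B^3 + 47007*A*B^4 + 34854*A*B^5 - 59896*A^2 - 75877*A^2*B + 270844*A^2*B^2 - 21999*A^2*B^3 - 121030*A^2*B^4 + 9880*A^2*B^5 + 7410*A^2*B^6 + 22461*A^3 - 88680*A^3*B - 61519*A^3*B^2 + 150122*A^3*B^3 - 4940*A^3*B^4 - 32110*A^3*B^5 + 25248*A^4 + 7487*A^4*B - 76570*A^4*B^2 - 14820*A^4*B^3 + 41990*A^4*B^4 + 12624*A^5*B - 17290*A^5*B^3"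
proof -
  have e: "98800 - 74100*B - 89536*B^2 + 52101*B^3 + 20068*B^4 - 74100*A + 245768*A*B - 46237*A*B^2 - 187960*A*B^3 + 47007*A*B^4 + 34854*A*B^5 - 59896*A^2 - 75877*A^2*B + 270844*A^2*B^2 - 21999*A^2*B^3 - 121030*A^2*B^4 + 9880*A^2*B^5 + 7410*A^2*B^6 + 22461*A^3 - 88680*A^3*B - 61519*A^3*B^2 + 150122*A^3*B^3 - 4940*A^3*B^4 - 32110*A^3*B^5 + 25248*A^4 + 7487*A^4*B - 76570*A^4*B^2 - 14820*A^4*B^3 + 41990*A^4*B^4 + 12624*A^5*B - 17290*A^5*B^3 =
    98800 * (1 - A)^5 * (1 - B)^6
    + 518700 * (1 - A)^5 * B * (1 - B)^5
    + 1021964 * (1 - A)^5 * B^2 * (1 - B)^4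
    + 928957 * (1 - A)^5 * B^3 * (1 - B)^3
    + 380155 * (1 - A)^5 * B^4 * (1 - B)^2
    + 60595 * (1 - A)^5 * B^5 * (1 - B)
    + 7333 * (1 - A)^5 * B^6
    + 419900 * A * (1 - A)^4 * (1 - B)^6
    + 2394668 * A * (1 - A)^4 * B * (1 - B)^5
    + 5180923 * A * (1 - A)^4 * B^2 * (1 - B)^4
    + 5247557 * A * (1 - A)^4 * B^3 * (1 - B)^3
    + 2452660 * A * (1 - A)^4 * B^4 * (1 - B)^2
    + 467255 * A * (1 - A)^4 * B^5 * (1 - B)
    + 55997 * A * (1 - A)^4 * B^6
    + 631704 * A^2 * (1 - A)^3 * (1 - B)^6
    + 3956419 * A^2 * (1 - A)^3 * B * (1 - B)^5
    + 9497071 * A^2 * (1 - A)^3 * B^2 * (1 - B)^4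
    + 10805345 * A^2 * (1 - A)^3 * B^3 * (1 - B)^3
    + 5789917 * A^2 * (1 - A)^3 * B^4 * (1 - B)^2
    + 1309508 * A^2 * (1 - A)^3 * B^5 * (1 - B)
    + 159990 * A^2 * (1 - A)^3 * B^6
    + 386173 * A^3 * (1 - A)^2 * (1 - B)^6
    + 2734335 * A^3 * (1 - A)^2 * B * (1 - B)^5
    + 7457311 * A^3 * (1 - A)^2 * B^2 * (1 - B)^4
    + 9686729 * A^3 * (1 - A)^2 * B^3 * (1 - B)^3
    + 5981768 * A^3 * (1 - A)^2 * B^4 * (1 - B)^2
    + 1584610 * A^3 * (1 - A)^2 * B^5 * (1 - B)
    + 202652 * A^3 * (1 - A)^2 * B^6
    + 88082 * A^4 * (1 - A) * (1 - B)^6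
    + 743560 * A^4 * (1 - A) * B * (1 - B)^5
    + 2376866 * A^4 * (1 - A) * B^2 * (1 - B)^4
    + 3561596 * A^4 * (1 - A) * B^3 * (1 - B)^3
    + 2495350 * A^4 * (1 - A) * B^4 * (1 - B)^2
    + 728904 * A^4 * (1 - A) * B^5 * (1 - B)
    + 95992 * A^4 * (1 - A) * B^6
    + 12513 * A^5 * (1 - B)^6
    + 102300 * A^5 * B * (1 - B)^5
    + 320787 * A^5 * B^2 * (1 - B)^4
    + 470562 * A^5 * B^3 * (1 - B)^3
    + 305364 * A^5 * B^4 * (1 - B)^2
    + 58392 * A^5 * B^5 * (1 - B)"
    by algebra
  have "0 \<le> 98800 * (1 - A)^5 * (1 - B)^6
    + 518700 * (1 - A)^5 * B * (1 - B)^5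
    + 1021964 * (1 - A)^5 * B^2 * (1 - B)^4
    + 928957 * (1 - A)^5 * B^3 * (1 - B)^3
    + 380155 * (1 - A)^5 * B^4 * (1 - B)^2
    + 60595 * (1 - A)^5 * B^5 * (1 - B)
    + 7333 * (1 - A)^5 * B^6
    + 419900 * A * (1 - A)^4 * (1 - B)^6
    + 2394668 * A * (1 - A)^4 * B * (1 - B)^5
    + 5180923 * A * (1 - A)^4 * B^2 * (1 - B)^4
    + 5247557 * A * (1 - A)^4 * B^3 * (1 - B)^3
    + 2452660 * A * (1 - A)^4 * B^4 * (1 - B)^2
    + 467255 * A * (1 - A)^4 * B^5 * (1 - B)
    + 55997 * A * (1 - A)^4 * B^6
    + 631704 * A^2 * (1 - A)^3 * (1 - B)^6
    + 3956419 * A^2 * (1 - A)^3 * B * (1 - B)^5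
    + 9497071 * A^2 * (1 - A)^3 * B^2 * (1 - B)^4
    + 10805345 * A^2 * (1 - A)^3 * B^3 * (1 - B)^3
    + 5789917 * A^2 * (1 - A)^3 * B^4 * (1 - B)^2
    + 1309508 * A^2 * (1 - A)^3 * B^5 * (1 - B)
    + 159990 * A^2 * (1 - A)^3 * B^6
    + 386173 * A^3 * (1 - A)^2 * (1 - B)^6
    + 2734335 * A^3 * (1 - A)^2 * B * (1 - B)^5
    + 7457311 * A^3 * (1 - A)^2 * B^2 * (1 - B)^4
    + 9686729 * A^3 * (1 - A)^2 * B^3 * (1 - B)^3
    + 5981768 * A^3 * (1 - A)^2 * B^4 * (1 - B)^2
    + 1584610 * A^3 * (1 - A)^2 * B^5 * (1 - B)
    + 202652 * A^3 * (1 - A)^2 * B^6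
    + 88082 * A^4 * (1 - A) * (1 - B)^6
    + 743560 * A^4 * (1 - A) * B * (1 - B)^5
    + 2376866 * A^4 * (1 - A) * B^2 * (1 - B)^4
    + 3561596 * A^4 * (1 - A) * B^3 * (1 - B)^3
    + 2495350 * A^4 * (1 - A) * B^4 * (1 - B)^2
    + 728904 * A^4 * (1 - A) * B^5 * (1 - B)
    + 95992 * A^4 * (1 - A) * B^6
    + 12513 * A^5 * (1 - B)^6
    + 102300 * A^5 * B * (1 - B)^5
    + 320787 * A^5 * B^2 * (1 - B)^4
    + 470562 * A^5 * B^3 * (1 - B)^3
    + 305364 * A^5 * B^4 * (1 - B)^2
    + 58392 * A^5 * B^5 * (1 - B)"
    by (intro add_nonneg_nonneg mult_nonneg_nonneg zero_le_power) (use assms in auto)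
  with e show ?thesis by simp
qed

lemma poly_P1:
  fixes A B :: real
  assumes "0 \<le> A" "A \<le> 1" "0 \<le> B" "B \<le> 1"
  shows "0 \<le> ((A+B)^2*(7333/2500) + (247/50)*(1-B^2)*((4/5)*A*(A+B) + 2*(1-A^2)))*(4*(1-A^2)*(2+A*B-B^2) + 2*A*(A+B)*(2+A*B-B^2) - (A+B)*(3+A*B)) - 4*(2+A*B-B^2)*((B-A)*A*(A+B)^2 + (247/50)*(1-B^2)*((1/2)*A*(A+B) + (1-A^2))^2)"
proof -
  have e1: "10000*((A+B)^2*(7333/2500) + (247/50)*(1-B^2)*((4/5)*A*(A+B) + 2*(1-A^2))) = 98800 - 69468*B^2 + 98184*A*B - 39520*A*B^3 - 29948*A^2 + 59280*A^2*B^2" by algebra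
  have e2: "(4*(1-A^2)*(2+A*B-B^2) + 2*A*(A+B)*(2+A*B-B^2) - (A+B)*(3+A*B)) = 8 - 3*B - 4*B^2 - 3*A + 8*A*B - A*B^2 - 2*A*B^3 - 4*A^2 - A^2*B + 4*A^2*B^2 - 2*A^3*B" by algebra
  have e3: "10000*((B-A)*A*(A+B)^2 + (247/50)*(1-B^2)*((1/2)*A*(A+B) + (1-A^2))^2) = 49400 - 49400*B^2 + 49400*A*B - 39400*A*B^3 - 49400*A^2 + 71750*A^2*B^2 - 12350*A^2*B^4 - 34700*A^3*B + 24700*A^3*B^3 + 2350*A^4 - 12350*A^4*B^2" by algebra
  have e4: "4*(98800 - 74100*B - 89536*B^2 + 52101*B^3 + 20068*B^4 - 74100*A + 245768*A*B - 46237*A*B^2 - 187960*A*B^3 + 47007*A*B^4 + 34854*A*B^5 - 59896*A^2 - 75877*A^2*B + 270844*A^2*B^2 - 21999*A^2*B^3 - 121030*A^2*B^4 + 9880*A^2*B^5 + 7410*A^2*B^6 + 22461*A^3 - 88680*A^3*B - 61519*A^3*B^2 + 150122*A^3*B^3 - 4940*A^3*B^4 - 32110*A^3*B^5 + 25248*A^4 + 7487*A^4*B - 76570*A^4*B^2 - 14820*A^4*B^3 + 41990*A^4*B^4 + 12624*A^5*B - 17290*A^5*B^3) = (98800 - 69468*B^2 + 98184*A*B - 39520*A*B^3 - 29948*A^2 + 59280*A^2*B^2)*(8 - 3*B - 4*B^2 - 3*A + 8*A*B - A*B^2 - 2*A*B^3 - 4*A^2 - A^2*B + 4*A^2*B^2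 - 2*A^3*B) - 4*(2+A*B-B^2)*(49400 - 49400*B^2 + 49400*A*B - 39400*A*B^3 - 49400*A^2 + 71750*A^2*B^2 - 12350*A^2*B^4 - 34700*A^3*B + 24700*A^3*B^3 + 2350*A^4 - 12350*A^4*B^2)" by algebra
  have "0 \<le> 4*(98800 - 74100*B - 89536*B^2 + 52101*B^3 + 20068*B^4 - 74100*A + 245768*A*B - 46237*A*B^2 - 187960*A*B^3 + 47007*A*B^4 + 34854*A*B^5 - 59896*A^2 - 75877*A^2*B + 270844*A^2*B^2 - 21999*A^2*B^3 - 121030*A^2*B^4 + 9880*A^2*B^5 + 7410*A^2*B^6 + 22461*A^3 - 88680*A^3*B - 61519*A^3*B^2 + 150122*A^3*B^3 - 4940*A^3*B^4 - 32110*A^3*B^5 + 25248*A^4 + 7487*A^4*B - 76570*A^4*B^2 - 14820*A^4*B^3 + 41990*A^4*B^4 + 12624*A^5*B - 17290*A^5*B^3)" using poly_P1_exp[OF assms] by simp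
  hence "0 \<le> (10000*((A+B)^2*(7333/2500) + (247/50)*(1-B^2)*((4/5)*A*(A+B) + 2*(1-A^2))))*(4*(1-A^2)*(2+A*B-B^2) + 2*A*(A+B)*(2+A*B-B^2) - (A+B)*(3+A*B)) - 4*(2+A*B-B^2)*(10000*((B-A)*A*(A+B)^2 + (247/50)*(1-B^2)*((1/2)*A*(A+B) + (1-A^2))^2))" unfolding e1 e2 e3 e4 .
  hence "0 \<le> 10000*(((A+B)^2*(7333/2500) + (247/50)*(1-B^2)*((4/5)*A*(A+B) + 2*(1-A^2)))*(4*(1-A^2)*(2+A*B-B^2) + 2*A*(A+B)*(2+A*B-B^2) - (A+B)*(3+A*B)) - 4*(2+A*B-B^2)*((B-A)*A*(A+B)^2 + (247/50)*(1-B^2)*((1/2)*A*(A+B) + (1-A^2))^2))" by (simp only: scale_aux)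
  thus ?thesis by (simp add: zero_le_mult_iff)
qed

lemma poly_P3:
  fixes A B :: real
  assumes "0 \<le> A" "A \<le> 1" "0 \<le> B" "B \<le> 1"
  shows "0 \<le> (4*(1-A^2)*(2+A*B-B^2) + 2*A*(A+B)*(2+A*B-B^2) - (A+B)*(3+A*B))"
proof -
  have e: "8 - 3*B - 4*B^2 - 3*A + 8*A*B - A*B^2 - 2*A*B^3 - 4*A^2 - A^2*B + 4*A^2*B^2 - 2*A^3*B =
    8 * (1 - A)^3 * (1 - B)^3
    + 21 * (1 - A)^3 * B * (1 - B)^2
    + 14 * (1 - A)^3 * B^2 * (1 - B)
    + 1 * (1 - A)^3 * B^3
    + 21 * A * (1 - A)^2 * (1 - B)^3
    + 62 * A * (1 - A)^2 * B * (1 - B)^2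
    + 48 * A * (1 - A)^2 * B^2 * (1 - B)
    + 5 * A * (1 - A)^2 * B^3
    + 14 * A^2 * (1 - A) * (1 - B)^3
    + 48 * A^2 * (1 - A) * B * (1 - B)^2
    + 44 * A^2 * (1 - A) * B^2 * (1 - B)
    + 6 * A^2 * (1 - A) * B^3
    + 1 * A^3 * (1 - B)^3
    + 5 * A^3 * B * (1 - B)^2
    + 6 * A^3 * B^2 * (1 - B)"
    by algebra
  have "0 \<le> 8 * (1 - A)^3 * (1 - B)^3
    + 21 * (1 - A)^3 * B * (1 - B)^2
    + 14 * (1 - A)^3 * B^2 * (1 - B)
    + 1 * (1 - A)^3 * B^3
    + 21 * A * (1 - A)^2 * (1 - B)^3
    + 62 * A * (1 - A)^2 * B * (1 - B)^2
    + 48 * A * (1 - A)^2 * B^2 * (1 - B)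
    + 5 * A * (1 - A)^2 * B^3
    + 14 * A^2 * (1 - A) * (1 - B)^3
    + 48 * A^2 * (1 - A) * B * (1 - B)^2
    + 44 * A^2 * (1 - A) * B^2 * (1 - B)
    + 6 * A^2 * (1 - A) * B^3
    + 1 * A^3 * (1 - B)^3
    + 5 * A^3 * B * (1 - B)^2
    + 6 * A^3 * B^2 * (1 - B)"
    by (intro add_nonneg_nonneg mult_nonneg_nonneg zero_le_power) (use assms in auto)
  with e have "0 \<le> 8 - 3*B - 4*B^2 - 3*A + 8*A*B - A*B^2 - 2*A*B^3 - 4*A^2 - A^2*B + 4*A^2*B^2 - 2*A^3*B" by simp
  moreover have "8 - 3*B - 4*B^2 - 3*A + 8*A*B - A*B^2 - 2*A*B^3 - 4*A^2 - A^2*B + 4*A^2*B^2 - 2*A^3*B = 1 * ((4*(1-A^2)*(2+A*B-B^2) + 2*A*(A+B)*(2+A*B-B^2) - (A+B)*(3+A*B)))"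
    by algebra
  ultimately show ?thesis by simp
qed

lemma poly_T2a:
  fixes A B :: real
  assumes "(4/5) \<le> A" "A \<le> 1" "(5/8) \<le> B" "B \<le> 1"
  shows "0 < A*(A+B)^3*(7333/12500) - (B-A)*A*(A+B)^2 - (247/50)*(1-B^2)*((3/10)*A*(A+B) + (1-A^2))^2"
proof -
  have e: "- 1600560000000 + 1600560000000*B^2 - 960336000000*A*B + 826407360000*A*B^3 + 2240784000000*A^2 - 2138620320000*A^2*B^2 + 144050400000*A^2*B^4 + 1566449280000*A^3*B - 672235200000*A^3*B^3 - 270203040000*A^4 + 784274400000*A^4*B^2 =
    51455647791
    + 1757855923200000 * (1 - A)^4 * (8*B - 5) * (1 - B)^3
    + 753878098800000 * (1 - A)^4 * (8*B - 5)^2 * (1 - B)^2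
    + 107852001300000 * (1 - A)^4 * (8*B - 5)^3 * (1 - B)
    + 5149534640625 * (1 - A)^4 * (8*B - 5)^4
    + 4455041509632000 * (5*A - 4) * (1 - A)^3 * (1 - B)^4
    + 3601731070656000 * (5*A - 4) * (1 - A)^3 * (8*B - 5) * (1 - B)^3
    + 1002773760768000 * (5*A - 4) * (1 - A)^3 * (8*B - 5)^2 * (1 - B)^2
    + 118107459024000 * (5*A - 4) * (1 - A)^3 * (8*B - 5)^3 * (1 - B)
    + 5054727424500 * (5*A - 4) * (1 - A)^3 * (8*B - 5)^4
    + 2851124235641600 * (5*A - 4)^2 * (1 - A)^2 * (1 - B)^4
    + 1835552770700800 * (5*A - 4)^2 * (1 - A)^2 * (8*B - 5) * (1 - B)^3
    + 439984926566400 * (5*A - 4)^2 * (1 - A)^2 * (8*B - 5)^2 * (1 - B)^2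
    + 46658993387200 * (5*A - 4)^2 * (1 - A)^2 * (8*B - 5)^3 * (1 - B)
    + 1850853843350 * (5*A - 4)^2 * (1 - A)^2 * (8*B - 5)^4
    + 607727061050880 * (5*A - 4)^3 * (1 - A) * (1 - B)^4
    + 359577216445440 * (5*A - 4)^3 * (1 - A) * (8*B - 5) * (1 - B)^3
    + 80106468203520 * (5*A - 4)^3 * (1 - A) * (8*B - 5)^2 * (1 - B)^2
    + 7975323576960 * (5*A - 4)^3 * (1 - A) * (8*B - 5)^3 * (1 - B)
    + 299813301780 * (5*A - 4)^3 * (1 - A) * (8*B - 5)^4
    + 43143700044544 * (5*A - 4)^4 * (1 - B)^4
    + 24499792182272 * (5*A - 4)^4 * (8*B - 5) * (1 - B)^3
    + 5239689634176 * (5*A - 4)^4 * (8*B - 5)^2 * (1 - B)^2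
    + 501233442848 * (5*A - 4)^4 * (8*B - 5)^3 * (1 - B)
    + 18137225089 * (5*A - 4)^4 * (8*B - 5)^4"
    by algebra
  have "0 < 51455647791
    + 1757855923200000 * (1 - A)^4 * (8*B - 5) * (1 - B)^3
    + 753878098800000 * (1 - A)^4 * (8*B - 5)^2 * (1 - B)^2
    + 107852001300000 * (1 - A)^4 * (8*B - 5)^3 * (1 - B)
    + 5149534640625 * (1 - A)^4 * (8*B - 5)^4
    + 4455041509632000 * (5*A - 4) * (1 - A)^3 * (1 - B)^4
    + 3601731070656000 * (5*A - 4) * (1 - A)^3 * (8*B - 5) * (1 - B)^3
    + 1002773760768000 * (5*A - 4) * (1 - A)^3 * (8*B - 5)^2 * (1 - B)^2
    + 118107459024000 * (5*A - 4) * (1 - A)^3 * (8*B - 5)^3 * (1 - B)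
    + 5054727424500 * (5*A - 4) * (1 - A)^3 * (8*B - 5)^4
    + 2851124235641600 * (5*A - 4)^2 * (1 - A)^2 * (1 - B)^4
    + 1835552770700800 * (5*A - 4)^2 * (1 - A)^2 * (8*B - 5) * (1 - B)^3
    + 439984926566400 * (5*A - 4)^2 * (1 - A)^2 * (8*B - 5)^2 * (1 - B)^2
    + 46658993387200 * (5*A - 4)^2 * (1 - A)^2 * (8*B - 5)^3 * (1 - B)
    + 1850853843350 * (5*A - 4)^2 * (1 - A)^2 * (8*B - 5)^4
    + 607727061050880 * (5*A - 4)^3 * (1 - A) * (1 - B)^4
    + 359577216445440 * (5*A - 4)^3 * (1 - A) * (8*B - 5) * (1 - B)^3
    + 80106468203520 * (5*A - 4)^3 * (1 - A) * (8*B - 5)^2 * (1 - B)^2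
    + 7975323576960 * (5*A - 4)^3 * (1 - A) * (8*B - 5)^3 * (1 - B)
    + 299813301780 * (5*A - 4)^3 * (1 - A) * (8*B - 5)^4
    + 43143700044544 * (5*A - 4)^4 * (1 - B)^4
    + 24499792182272 * (5*A - 4)^4 * (8*B - 5) * (1 - B)^3
    + 5239689634176 * (5*A - 4)^4 * (8*B - 5)^2 * (1 - B)^2
    + 501233442848 * (5*A - 4)^4 * (8*B - 5)^3 * (1 - B)
    + 18137225089 * (5*A - 4)^4 * (8*B - 5)^4"
    by (intro add_pos_nonneg mult_nonneg_nonneg zero_le_power) (use assms in auto)
  with e have "0 < - 1600560000000 + 1600560000000*B^2 - 960336000000*A*B + 826407360000*A*B^3 + 2240784000000*A^2 - 2138620320000*A^2*B^2 + 144050400000*A^2*B^4 + 1566449280000*A^3*B - 672235200000*A^3*B^3 - 270203040000*A^4 + 784274400000*A^4*B^2" by simp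
  moreover have "- 1600560000000 + 1600560000000*B^2 - 960336000000*A*B + 826407360000*A*B^3 + 2240784000000*A^2 - 2138620320000*A^2*B^2 + 144050400000*A^2*B^4 + 1566449280000*A^3*B - 672235200000*A^3*B^3 - 270203040000*A^4 + 784274400000*A^4*B^2 = 324000000000 * (A*(A+B)^3*(7333/12500) - (B-A)*A*(A+B)^2 - (247/50)*(1-B^2)*((3/10)*A*(A+B) + (1-A^2))^2)"
    by algebra
  ultimately show ?thesis by simp
qed

lemma poly_T2b:
  fixes A B :: real
  assumes "(9/10) \<le> A" "A \<le> 1" "0 \<le> B" "B \<le> (5/8)"
  shows "0 < A*(A+B)^3*(7333/12500) - (B-A)*A*(A+B)^2 - (247/50)*(1-B^2)*((3/10)*A*(A+B) + (1-A^2))^2"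
proof -
  have e: "- 771875000000 + 771875000000*B^2 - 463125000000*A*B + 398537500000*A*B^3 + 1080625000000*A^2 - 1031356250000*A^2*B^2 + 69468750000*A^2*B^4 + 755425000000*A^3*B - 324187500000*A^3*B^3 - 130306250000*A^4 + 378218750000*A^4*B^2 =
    17937319375
    + 10711386000000 * (1 - A)^4 * B * (5 - 8*B)^3
    + 330923567750000 * (1 - A)^4 * B^2 * (5 - 8*B)^2
    + 3482893097000000 * (1 - A)^4 * B^3 * (5 - 8*B)
    + 12730962947000000 * (1 - A)^4 * B^4
    + 250424316000 * (10*A - 9) * (1 - A)^3 * (5 - 8*B)^4
    + 13396178712000 * (10*A - 9) * (1 - A)^3 * B * (5 - 8*B)^3
    + 251871251744000 * (10*A - 9) * (1 - A)^3 * B^2 * (5 - 8*B)^2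
    + 2060838801868000 * (10*A - 9) * (1 - A)^3 * B^3 * (5 - 8*B)
    + 6437638930536000 * (10*A - 9) * (1 - A)^3 * B^4
    + 75843033400 * (10*A - 9)^2 * (1 - A)^2 * (5 - 8*B)^4
    + 3415391268800 * (10*A - 9)^2 * (1 - A)^2 * B * (5 - 8*B)^3
    + 56404688875600 * (10*A - 9)^2 * (1 - A)^2 * B^2 * (5 - 8*B)^2
    + 414218068303200 * (10*A - 9)^2 * (1 - A)^2 * B^3 * (5 - 8*B)
    + 1179454316956400 * (10*A - 9)^2 * (1 - A)^2 * B^4
    + 7648371560 * (10*A - 9)^3 * (1 - A) * (5 - 8*B)^4
    + 323858689920 * (10*A - 9)^3 * (1 - A) * B * (5 - 8*B)^3
    + 5047607379040 * (10*A - 9)^3 * (1 - A) * B^2 * (5 - 8*B)^2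
    + 34954319554880 * (10*A - 9)^3 * (1 - A) * B^3 * (5 - 8*B)
    + 93715416009760 * (10*A - 9)^3 * (1 - A) * B^4
    + 256810289 * (10*A - 9)^4 * (5 - 8*B)^4
    + 10556329248 * (10*A - 9)^4 * B * (5 - 8*B)^3
    + 159486250976 * (10*A - 9)^4 * B^2 * (5 - 8*B)^2
    + 1065782271872 * (10*A - 9)^4 * B^3 * (5 - 8*B)
    + 2741552493744 * (10*A - 9)^4 * B^4"
    by algebra
  have "0 < 17937319375
    + 10711386000000 * (1 - A)^4 * B * (5 - 8*B)^3
    + 330923567750000 * (1 - A)^4 * B^2 * (5 - 8*B)^2
    + 3482893097000000 * (1 - A)^4 * B^3 * (5 - 8*B)
    + 12730962947000000 * (1 - A)^4 * B^4
    + 250424316000 * (10*A - 9) * (1 - A)^3 * (5 - 8*B)^4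
    + 13396178712000 * (10*A - 9) * (1 - A)^3 * B * (5 - 8*B)^3
    + 251871251744000 * (10*A - 9) * (1 - A)^3 * B^2 * (5 - 8*B)^2
    + 2060838801868000 * (10*A - 9) * (1 - A)^3 * B^3 * (5 - 8*B)
    + 6437638930536000 * (10*A - 9) * (1 - A)^3 * B^4
    + 75843033400 * (10*A - 9)^2 * (1 - A)^2 * (5 - 8*B)^4
    + 3415391268800 * (10*A - 9)^2 * (1 - A)^2 * B * (5 - 8*B)^3
    + 56404688875600 * (10*A - 9)^2 * (1 - A)^2 * B^2 * (5 - 8*B)^2
    + 414218068303200 * (10*A - 9)^2 * (1 - A)^2 * B^3 * (5 - 8*B)
    + 1179454316956400 * (10*A - 9)^2 * (1 - A)^2 * B^4
    + 7648371560 * (10*A - 9)^3 * (1 - A) * (5 - 8*B)^4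
    + 323858689920 * (10*A - 9)^3 * (1 - A) * B * (5 - 8*B)^3
    + 5047607379040 * (10*A - 9)^3 * (1 - A) * B^2 * (5 - 8*B)^2
    + 34954319554880 * (10*A - 9)^3 * (1 - A) * B^3 * (5 - 8*B)
    + 93715416009760 * (10*A - 9)^3 * (1 - A) * B^4
    + 256810289 * (10*A - 9)^4 * (5 - 8*B)^4
    + 10556329248 * (10*A - 9)^4 * B * (5 - 8*B)^3
    + 159486250976 * (10*A - 9)^4 * B^2 * (5 - 8*B)^2
    + 1065782271872 * (10*A - 9)^4 * B^3 * (5 - 8*B)
    + 2741552493744 * (10*A - 9)^4 * B^4"
    by (intro add_pos_nonneg mult_nonneg_nonneg zero_le_power) (use assms in auto)
  with e have "0 < - 771875000000 + 771875000000*B^2 - 463125000000*A*B + 398537500000*A*B^3 + 1080625000000*A^2 - 1031356250000*A^2*B^2 + 69468750000*A^2*B^4 + 755425000000*A^3*B - 324187500000*A^3*B^3 - 130306250000*A^4 + 378218750000*A^4*B^2" by simp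
  moreover have "- 771875000000 + 771875000000*B^2 - 463125000000*A*B + 398537500000*A*B^3 + 1080625000000*A^2 - 1031356250000*A^2*B^2 + 69468750000*A^2*B^4 + 755425000000*A^3*B - 324187500000*A^3*B^3 - 130306250000*A^4 + 378218750000*A^4*B^2 = 156250000000 * (A*(A+B)^3*(7333/12500) - (B-A)*A*(A+B)^2 - (247/50)*(1-B^2)*((3/10)*A*(A+B) + (1-A^2))^2)"
    by algebra
  ultimately show ?thesis by simp
qed

lemma poly_R3:
  fixes A B :: real
  assumes "(4/5) \<le> A" "A \<le> (9/10)" "0 \<le> B" "B \<le> (5/8)"
  shows "0 < -((9/25)*B^2*(A+B)^2 - (1-A^2)*(1+A*B)^2)"
proof -
  have e: "64000000 - 23040000*B^4 + 128000000*A*B - 46080000*A*B^3 - 64000000*A^2 + 40960000*A^2*B^2 - 128000000*A^3*B - 64000000*A^4*B^2 =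
    8756875
    + 22853 * (9 - 10*A)^4 * (5 - 8*B)^4
    + 1026208 * (9 - 10*A)^4 * B * (5 - 8*B)^3
    + 15853440 * (9 - 10*A)^4 * B^2 * (5 - 8*B)^2
    + 96053248 * (9 - 10*A)^4 * B^3 * (5 - 8*B)
    + 162578432 * (9 - 10*A)^4 * B^4
    + 150056 * (5*A - 4) * (9 - 10*A)^3 * (5 - 8*B)^4
    + 6972672 * (5*A - 4) * (9 - 10*A)^3 * B * (5 - 8*B)^3
    + 109198336 * (5*A - 4) * (9 - 10*A)^3 * B^2 * (5 - 8*B)^2
    + 654909440 * (5*A - 4) * (9 - 10*A)^3 * B^3 * (5 - 8*B)
    + 1021640704 * (5*A - 4) * (9 - 10*A)^3 * B^4
    + 347768 * (5*A - 4)^2 * (9 - 10*A)^2 * (5 - 8*B)^4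
    + 16977664 * (5*A - 4)^2 * (9 - 10*A)^2 * B * (5 - 8*B)^3
    + 270447616 * (5*A - 4)^2 * (9 - 10*A)^2 * B^2 * (5 - 8*B)^2
    + 1591672832 * (5*A - 4)^2 * (9 - 10*A)^2 * B^3 * (5 - 8*B)
    + 2139881472 * (5*A - 4)^2 * (9 - 10*A)^2 * B^4
    + 321696 * (5*A - 4)^3 * (9 - 10*A) * (5 - 8*B)^4
    + 17069056 * (5*A - 4)^3 * (9 - 10*A) * B * (5 - 8*B)^3
    + 278458368 * (5*A - 4)^3 * (9 - 10*A) * B^2 * (5 - 8*B)^2
    + 1578860544 * (5*A - 4)^3 * (9 - 10*A) * B^3 * (5 - 8*B)
    + 1493958656 * (5*A - 4)^3 * (9 - 10*A) * B^4
    + 87120 * (5*A - 4)^4 * (5 - 8*B)^4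
    + 5589504 * (5*A - 4)^4 * B * (5 - 8*B)^3
    + 95053824 * (5*A - 4)^4 * B^2 * (5 - 8*B)^2
    + 493387776 * (5*A - 4)^4 * B^3 * (5 - 8*B)"
    by algebra
  have "0 < 8756875
    + 22853 * (9 - 10*A)^4 * (5 - 8*B)^4
    + 1026208 * (9 - 10*A)^4 * B * (5 - 8*B)^3
    + 15853440 * (9 - 10*A)^4 * B^2 * (5 - 8*B)^2
    + 96053248 * (9 - 10*A)^4 * B^3 * (5 - 8*B)
    + 162578432 * (9 - 10*A)^4 * B^4
    + 150056 * (5*A - 4) * (9 - 10*A)^3 * (5 - 8*B)^4
    + 6972672 * (5*A - 4) * (9 - 10*A)^3 * B * (5 - 8*B)^3
    + 109198336 * (5*A - 4) * (9 - 10*A)^3 * B^2 * (5 - 8*B)^2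
    + 654909440 * (5*A - 4) * (9 - 10*A)^3 * B^3 * (5 - 8*B)
    + 1021640704 * (5*A - 4) * (9 - 10*A)^3 * B^4
    + 347768 * (5*A - 4)^2 * (9 - 10*A)^2 * (5 - 8*B)^4
    + 16977664 * (5*A - 4)^2 * (9 - 10*A)^2 * B * (5 - 8*B)^3
    + 270447616 * (5*A - 4)^2 * (9 - 10*A)^2 * B^2 * (5 - 8*B)^2
    + 1591672832 * (5*A - 4)^2 * (9 - 10*A)^2 * B^3 * (5 - 8*B)
    + 2139881472 * (5*A - 4)^2 * (9 - 10*A)^2 * B^4
    + 321696 * (5*A - 4)^3 * (9 - 10*A) * (5 - 8*B)^4
    + 17069056 * (5*A - 4)^3 * (9 - 10*A) * B * (5 - 8*B)^3
    + 278458368 * (5*A - 4)^3 * (9 - 10*A) * B^2 * (5 - 8*B)^2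
    + 1578860544 * (5*A - 4)^3 * (9 - 10*A) * B^3 * (5 - 8*B)
    + 1493958656 * (5*A - 4)^3 * (9 - 10*A) * B^4
    + 87120 * (5*A - 4)^4 * (5 - 8*B)^4
    + 5589504 * (5*A - 4)^4 * B * (5 - 8*B)^3
    + 95053824 * (5*A - 4)^4 * B^2 * (5 - 8*B)^2
    + 493387776 * (5*A - 4)^4 * B^3 * (5 - 8*B)"
    by (intro add_pos_nonneg mult_nonneg_nonneg zero_le_power) (use assms in auto)
  with e have "0 < 64000000 - 23040000*B^4 + 128000000*A*B - 46080000*A*B^3 - 64000000*A^2 + 40960000*A^2*B^2 - 128000000*A^3*B - 64000000*A^4*B^2" by simp
  moreover have "64000000 - 23040000*B^4 + 128000000*A*B - 46080000*A*B^3 - 64000000*A^2 + 40960000*A^2*B^2 - 128000000*A^3*B - 64000000*A^4*B^2 = 64000000 * (-((9/25)*B^2*(A+B)^2 - (1-A^2)*(1+A*B)^2))"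
    by algebra
  ultimately show ?thesis by simp
qed

lemma cos_lb: "1 - x^2/2 \<le> cos (x::real)"
proof -
  have "cos x = cos (2*(x/2))" by simp
  also have "\<dots> = 1 - 2 * sin (x/2) ^ 2" by (rule cos_double_sin)
  finally have e: "cos x = 1 - 2 * sin (x/2) ^ 2" .
  have "\<bar>sin (x/2)\<bar> \<le> \<bar>x/2\<bar>" by (rule abs_sin_x_le_abs_x)
  hence "sin (x/2) ^ 2 \<le> (x/2)^2"
    by (metis abs_le_square_iff)
  thus ?thesis using e by (simp add: power2_eq_square)
qed

lemma sin_lb:
  assumes "0 \<le> (x::real)" shows "x - x^3/6 \<le> sin x"
proof -
  let ?f = "\<lambda>t::real. sin t - t + t^3/6"
  have "?f 0 \<le> ?f x"
  proof (rule DERIV_nonneg_imp_nondecreasing[OF assms])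
    fix t :: real
    show "\<exists>y. DERIV ?f t :> y \<and> 0 \<le> y"
      by (rule exI[of _ "cos t - 1 + t^2/2"])
         (auto intro!: derivative_eq_intros simp: algebra_simps, use cos_lb[of t] in linarith)
  qed
  thus ?thesis by simp
qed

lemma pi_lo: "157/50 \<le> pi" using pi_approx by auto
lemma pi_hi: "pi \<le> 31416/10000" using pi_approx by auto

lemma cosN_lb: "1 - (247/50) * x^2 \<le> cos (pi * (x::real))"
proof -
  have "pi^2 \<le> (31416/10000)^2" using pi_hi pi_gt_zero by (intro power_mono) auto
  hence "pi^2 * x^2 \<le> (31416/10000)^2 * x^2" by (intro mult_right_mono) auto
  moreover have "(31416/10000::real)^2 * x^2 \<le> (247/25) * x^2"
    by (intro mult_right_mono) (auto simp: power2_eq_square)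
  ultimately have "pi^2 * x^2 \<le> (247/25) * x^2" by linarith
  hence "(pi*x)^2/2 \<le> (247/50) * x^2" by (simp add: power_mult_distrib)
  with cos_lb[of "pi*x"] show ?thesis by linarith
qed

lemma sin_pw_lb:
  assumes "0 \<le> (w::real)"
  shows "(157/50)*w - (517/100)*w^3 \<le> sin (pi*w)"
proof -
  have "pi^3 \<le> (31416/10000)^3" using pi_hi pi_gt_zero by (intro power_mono) auto
  hence a: "pi^3 * w^3 \<le> (31416/10000)^3 * w^3" using assms by (intro mult_right_mono) auto
  have b: "(157/50)*w \<le> pi * w" using pi_lo assms by (intro mult_right_mono) auto
  have a3: "(31416/10000::real)^3 * w^3 \<le> (3102/100) * w^3"
    using assms by (intro mult_right_mono) (auto simp: power3_eq_cube)
  have "pi^3 * w^3 \<le> (3102/100) * w^3" using a a3 by linarith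
  hence "(pi*w)^3/6 \<le> (517/100)*w^3" by (simp add: power_mult_distrib)
  moreover have "0 \<le> pi*w" using assms by simp
  ultimately show ?thesis using b sin_lb[of "pi*w"] by linarith
qed

lemma frac_helper:
  assumes "0 < (a::real)" "0 < b"
  shows "(1 + b*a)/(a*(b+a)) = 1 + (1-a^2)/(a*(a+b))"
proof -
  have den: "a*(a+b) \<noteq> 0" using assms by simp
  have "1 + (1-a^2)/(a*(a+b)) = (a*(a+b) + (1-a^2))/(a*(a+b))"
    using den by (simp add: add_divide_distrib)
  also have "a*(a+b) + (1-a^2) = 1 + b*a" by (simp add: algebra_simps power2_eq_square)
  finally show ?thesis by (simp add: add.commute)
qed

lemma kap_facts:
  assumes "0 < A" "A \<le> (1::real)"
  shows "0 \<le> kap A" "kap A \<le> 1" "(kap A)^2 = 1 - A^2"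
proof -
  have h: "0 \<le> 1 - A^2" using assms by (simp add: power_le_one)
  show "0 \<le> kap A" unfolding kap_def using h by simp
  show "kap A \<le> 1" unfolding kap_def using assms by simp
  show "(kap A)^2 = 1 - A^2" unfolding kap_def using h by simp
qed

lemma F2:
  fixes A B U :: real
  assumes A0: "0 < A" and A1: "A \<le> 1" and B0: "0 < B" and B1: "B \<le> 1"
    and LU: "LL A B \<le> U" and G0: "GG A B U = 0"
  shows "(A+B)*U + B * kap A * MM A B U + A * eps B * NN A B U \<ge> sqrt (2*(1 + A*B)) / 2"
proof -
  define k where "k = kap A"
  define e where "e = eps B"
  have k0: "0 \<le> k" and k1: "k \<le> 1" and kk: "k^2 = 1 - A^2"
    using kap_facts[OF A0 A1] by (auto simp: k_def)
  have e0: "0 \<le> e" and e1: "e \<le> 1" and ee: "e^2 = 1 - B^2"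
    using kap_facts[OF B0 B1] by (auto simp: e_def kap_def eps_def)
  define S where "S = A + B"
  have S0: "0 < S" using A0 B0 by (simp add: S_def)
  define D where "D = 2 + A*B - B^2"
  have D0: "0 < D"
  proof -
    have "B^2 \<le> 1" using B0 B1 by (simp add: power_le_one)
    moreover have "0 < A*B" using A0 B0 by simp
    ultimately show ?thesis by (simp add: D_def)
  qed
  define Q where "Q = (1 - A^2)/(A*S)"
  have A2: "A^2 \<le> 1" using A0 A1 by (simp add: power_le_one)
  have Q0: "0 \<le> Q" unfolding Q_def using A0 S0 A2 by simp
  have AQS: "A*S*Q = 1 - A^2" unfolding Q_def using A0 S0 by simp
  define P where "P = PP A B"
  have Pdef: "P = (1 + A*B)/(B*S)" by (simp add: P_def PP_def S_def)
  have P1: "1 \<le> P"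
  proof -
    have "B^2 \<le> 1" using B0 B1 by (simp add: power_le_one)
    moreover have "B*S = A*B + B^2" by (simp add: S_def algebra_simps power2_eq_square)
    ultimately have "B*S \<le> 1 + A*B" by linarith
    moreover have "0 < B*S" using B0 S0 by simp
    ultimately show ?thesis unfolding Pdef by simp
  qed
  have MMe: "MM A B U = k*(P - U)" by (simp add: MM_def k_def P_def)
  have NNe: "NN A B U = e*(U + Q)"
    by (simp add: NN_def e_def Q_def S_def kk[unfolded k_def])
  have L0: "0 \<le> LL A B"
  proof -
    have "0 \<le> k/(1+k)" using k0 by simp
    moreover have "0 \<le> P" using P1 by simp
    ultimately have "0 \<le> k/(1+k)*P" by (rule mult_nonneg_nonneg)
    thus ?thesis by (simp add: LL_def k_def P_def PP_def)
  qed
  have U0: "0 \<le> U" using L0 LU by linarith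
  have fid: "(A+B)*U + B * kap A * MM A B U + A * eps B * NN A B U = D*((1-A^2)/S + A*U)"
  proof -
    have "B * kap A * MM A B U = B*k^2*P - B*k^2*U"
      unfolding MMe k_def[symmetric] by (simp add: power2_eq_square algebra_simps)
    hence a: "B * kap A * MM A B U = B*(1-A^2)*P - B*(1-A^2)*U" unfolding kk .
    have "A * eps B * NN A B U = A*e^2*U + A*e^2*Q"
      unfolding NNe e_def[symmetric] by (simp add: power2_eq_square algebra_simps)
    hence b: "A * eps B * NN A B U = A*(1-B^2)*U + A*(1-B^2)*Q" unfolding ee .
    have c: "B*(1-A^2)*P = (1-A^2)*(1+A*B)/S"
      unfolding Pdef using B0 by simp
    have d: "A*(1-B^2)*Q = (1-B^2)*(1-A^2)/S"
      unfolding Q_def using A0 by simp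
    have f: "(1-A^2)*(1+A*B)/S + (1-B^2)*(1-A^2)/S = D*((1-A^2)/S)"
      unfolding D_def by (simp add: add_divide_distrib[symmetric] algebra_simps)
    have g: "(A+B)*U - B*(1-A^2)*U + A*(1-B^2)*U = D*(A*U)"
      unfolding D_def by (simp add: algebra_simps power2_eq_square)
    show ?thesis unfolding a b c d using f g by (simp add: distrib_left)
  qed
  have tT: "sqrt (2*(1 + A*B)) / 2 \<le> (3 + A*B)/4"
  proof -
    have "0 \<le> (3 + A*B)/2" using A0 B0 by simp
    moreover have "2*(1 + A*B) \<le> ((3 + A*B)/2)^2"
    proof -
      have "0 \<le> (1 - A*B)^2" by simp
      thus ?thesis by (simp add: power2_eq_square algebra_simps)
    qed
    ultimately have "sqrt (2*(1 + A*B)) \<le> (3 + A*B)/2" by (rule real_le_lsqrt)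
    thus ?thesis by simp
  qed
  have Wst: "0 \<le> 4*(1-A^2)*D + 2*A*S*D - S*(3+A*B)"
    using poly_P3[of A B] A0 A1 B0 B1 unfolding D_def S_def by simp
  have key: "(3 + A*B)/4 \<le> D*((1-A^2)/S + A*U)"
  proof (cases "1/2 \<le> U")
    case True
    have eqD: "D*((1-A^2)/S + A/2) = (4*(1-A^2)*D + 2*A*S*D)/(4*S)"
      using S0 by (simp add: field_simps)
    have e1: "(3 + A*B)/4 = S*(3+A*B)/(4*S)" using S0 by simp
    have "S*(3+A*B)/(4*S) \<le> (4*(1-A^2)*D + 2*A*S*D)/(4*S)"
      using Wst S0 by (intro divide_right_mono) auto
    hence "(3 + A*B)/4 \<le> D*((1-A^2)/S + A/2)" unfolding e1[symmetric] eqD[symmetric] .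
    also have "\<dots> \<le> D*((1-A^2)/S + A*U)"
      using True A0 D0 by (intro mult_left_mono) auto
    finally show ?thesis .
  next
    case False
    define w where "w = 1/2 - U"
    have w0: "0 < w" and w1: "w \<le> 1/2" using False U0 by (auto simp: w_def)
    have Uw: "U = 1/2 - w" by (simp add: w_def)
    have G: "(A+B)*cos(pi*U) = B*cos(pi*MM A B U) - A*cos(pi*NN A B U)"
      using G0 unfolding GG_def by linarith
    have cM: "B*cos(pi*MM A B U) \<le> B" using B0 by simp
    have cN: "A*(1 - (247/50)*(NN A B U)^2) \<le> A*cos(pi*NN A B U)"
      using cosN_lb A0 by (intro mult_left_mono) auto
    have cU: "cos(pi*U) = sin(pi*w)"
      by (simp add: cos_sin_eq w_def algebra_simps)
    have sU: "S*((157/50)*w - (517/100)*w^3) \<le> S * sin (pi*w)"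
      using sin_pw_lb[of w] w0 S0 by (intro mult_left_mono) auto
    have "(NN A B U)^2 = e^2*(U + Q)^2"
      unfolding NNe by (simp add: power_mult_distrib)
    hence NN2: "(NN A B U)^2 = (1-B^2)*(1/2 - w + Q)^2"
      unfolding ee by (simp add: w_def)
    have H: "S*((157/50)*w - (517/100)*w^3) \<le> B - A + (247/50)*A*(1-B^2)*(1/2 - w + Q)^2"
    proof -
      have "A*(1 - (247/50)*(NN A B U)^2) = A - (247/50)*A*(1-B^2)*(1/2 - w + Q)^2"
        unfolding NN2 by algebra
      moreover have "S*cos(pi*U) = B*cos(pi*MM A B U) - A*cos(pi*NN A B U)" using G by (simp add: S_def)
      moreover have "S * cos(pi*U) = S * sin (pi*w)" using cU by simp
      ultimately show ?thesis using cM cN sU by linarith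
    qed
    have cA: "0 \<le> (247/50)*A*(1-B^2)"
    proof -
      have "B^2 \<le> 1" using B0 B1 by (simp add: power_le_one)
      thus ?thesis using A0 by simp
    qed
    have w15: "w < 1/5"
    proof (rule ccontr)
      assume "\<not> w < 1/5"
      hence w5: "1/5 \<le> w" by simp
      have "LL A B \<le> 3/10" using LU Uw w5 by linarith
      hence "k/(1+k)*P \<le> 3/10" by (simp add: LL_def k_def P_def PP_def)
      hence "k*P/(1+k) \<le> 3/10" by simp
      hence "k*P \<le> 3/10*(1+k)" using k0 by (simp add: pos_divide_le_eq)
      moreover have "3/10*(1+k) \<le> 3/5" using k1 by simp
      ultimately have kP: "k*P \<le> 3/5" by linarith
      have kP0: "0 \<le> k*P" using k0 P1 by simp
      have "(k*P)^2 \<le> (3/5)^2" using kP kP0 by (intro power_mono) auto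
      hence "(1-A^2)*P^2 \<le> (3/5)^2" by (simp add: power_mult_distrib kk)
      hence kP2: "(1-A^2)*P^2 \<le> 9/25" by (simp add: power2_eq_square)
      have "(1-A^2) \<le> (1-A^2)*P^2"
      proof -
        have "1 \<le> P^2" using P1 by (simp add: one_le_power)
        thus ?thesis using A2 by (simp add: mult_le_cancel_left1)
      qed
      hence "A^2 \<ge> 16/25" using kP2 by simp
      hence A45: "4/5 \<le> A"
      proof -
        assume h: "A^2 \<ge> 16/25"
        show ?thesis
        proof (rule ccontr)
          assume "\<not> 4/5 \<le> A"
          hence "A^2 < (4/5)^2" using A0 by (intro power_strict_mono) auto
          thus False using h by (simp add: power2_eq_square)
        qed
      qed
      have reg: "0 \<le> (9/25)*B^2*(A+B)^2 - (1-A^2)*(1+A*B)^2"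
      proof -
        have "(1-A^2)*P^2 = (1-A^2)*(1+A*B)^2/(B^2*S^2)"
          by (simp add: Pdef power_divide power_mult_distrib)
        with kP2 have "(1-A^2)*(1+A*B)^2/(B^2*S^2) \<le> 9/25" by simp
        hence "(1-A^2)*(1+A*B)^2 \<le> 9/25*(B^2*S^2)"
          using B0 S0 by (simp add: divide_le_eq)
        thus ?thesis by (simp add: S_def algebra_simps)
      qed
      have sw: "7333/12500 \<le> (157/50)*w - (517/100)*w^3"
      proof -
        have "w^2 \<le> (1/2)^2" using w0 w1 by (intro power_mono) auto
        hence "w^2 \<le> 1/4" by (simp add: power2_eq_square)
        hence "0 \<le> (157/50 - 517/100*(w^2 + w/5 + 1/25))" using w1 by simp
        moreover have "0 \<le> w - 1/5" using w5 by simp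
        ultimately have "0 \<le> (w - 1/5)*(157/50 - 517/100*(w^2 + w/5 + 1/25))" by simp
        moreover have "(w - 1/5)*(157/50 - 517/100*(w^2 + w/5 + 1/25)) = (157/50)*w - (517/100)*w^3 - 7333/12500"
          by algebra
        ultimately show ?thesis by simp
      qed
      have sq: "(1/2 - w + Q)^2 \<le> (3/10 + Q)^2"
        using w1 w5 Q0 by (intro power_mono) auto
      have "S*(7333/12500) \<le> B - A + (247/50)*A*(1-B^2)*(3/10 + Q)^2"
      proof -
        have "S*(7333/12500) \<le> S*((157/50)*w - (517/100)*w^3)" using sw S0 by simp
        also have "\<dots> \<le> B - A + (247/50)*A*(1-B^2)*(1/2 - w + Q)^2" by (rule H)
        also have "\<dots> \<le> B - A + (247/50)*A*(1-B^2)*(3/10 + Q)^2"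
          using mult_left_mono[OF sq cA] by linarith
        finally show ?thesis .
      qed
      hence "(A*S^2)*(S*(7333/12500)) \<le> (A*S^2)*(B - A + (247/50)*A*(1-B^2)*(3/10 + Q)^2)"
        using A0 S0 by (intro mult_left_mono) auto
      moreover have "(A*S^2)*(B - A + (247/50)*A*(1-B^2)*(3/10 + Q)^2)
          = (B-A)*A*S^2 + (247/50)*(1-B^2)*((3/10)*A*S + A*S*Q)^2"
        by algebra
      moreover have "(A*S^2)*(S*(7333/12500)) = A*S^3*(7333/12500)"
        by (simp add: power2_eq_square power3_eq_cube)
      ultimately have "A*S^3*(7333/12500) - (B-A)*A*S^2 - (247/50)*(1-B^2)*((3/10)*A*S + (1-A^2))^2 \<le> 0"
        unfolding AQS by linarith
      hence t2: "A*(A+B)^3*(7333/12500) - (B-A)*A*(A+B)^2 - (247/50)*(1-B^2)*((3/10)*A*(A+B) + (1-A^2))^2 \<le> 0"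
        unfolding S_def .
      show False
      proof (cases "5/8 \<le> B")
        case True
        from poly_T2a[of A B] A45 A1 True B1 t2 show False by simp
      next
        case B58: False
        show False
        proof (cases "9/10 \<le> A")
          case True
          from poly_T2b[of A B] A1 True B0 B58 t2 show False by simp
        next
          case False
          from poly_R3[of A B] A45 False B0 B58 reg show False by simp
        qed
      qed
    qed
    define Lam where "Lam = S*(7333/2500) + (247/50)*A*(1-B^2)*(4/5 + 2*Q)"
    define K0 where "K0 = B - A + (247/50)*A*(1-B^2)*(1/2 + Q)^2"
    have sl: "S*((7333/2500)*w) \<le> S*((157/50)*w - (517/100)*w^3)"
    proof -
      have "w^2 \<le> (1/5)^2" using w0 w15 by (intro power_mono) auto
      hence "w^2 \<le> 1/25" by (simp add: power2_eq_square)
      hence "w*w^2 \<le> w*(1/25)" using w0 by (intro mult_left_mono) auto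
      moreover have "w^3 = w*w^2" by (simp add: power3_eq_cube power2_eq_square)
      ultimately have "w^3 \<le> w/25" by simp
      thus ?thesis using S0 by (intro mult_left_mono) auto
    qed
    have sq2: "(1/2 - w + Q)^2 \<le> (1/2 + Q)^2 - (4/5 + 2*Q)*w"
    proof -
      have "w^2 \<le> w/5" using w0 w15 by (simp add: power2_eq_square) 
      thus ?thesis by (simp add: power2_eq_square algebra_simps)
    qed
    have LK: "Lam * w \<le> K0"
    proof -
      have "S*((7333/2500)*w) \<le> B - A + (247/50)*A*(1-B^2)*(1/2 - w + Q)^2"
        using sl H by linarith
      also have "\<dots> \<le> B - A + (247/50)*A*(1-B^2)*((1/2 + Q)^2 - (4/5 + 2*Q)*w)"
        using mult_left_mono[OF sq2 cA] by linarith
      finally have "S*((7333/2500)*w) \<le> B - A + (247/50)*A*(1-B^2)*((1/2 + Q)^2 - (4/5 + 2*Q)*w)" .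
      moreover have "Lam*w = S*((7333/2500)*w) + (247/50)*A*(1-B^2)*((4/5+2*Q)*w)"
        unfolding Lam_def by algebra
      moreover have "B - A + (247/50)*A*(1-B^2)*((1/2 + Q)^2 - (4/5 + 2*Q)*w) = K0 - (247/50)*A*(1-B^2)*((4/5+2*Q)*w)"
        unfolding K0_def by algebra
      ultimately show ?thesis by linarith
    qed
    have LamS: "Lam*S = (A+B)^2*(7333/2500) + (247/50)*(1-B^2)*((4/5)*A*(A+B) + 2*(1-A^2))"
    proof -
      have "Lam*S = S^2*(7333/2500) + (247/50)*(1-B^2)*((4/5)*A*S + 2*(A*S*Q))"
        unfolding Lam_def by algebra
      thus ?thesis unfolding AQS by (simp add: S_def)
    qed
    have K0A: "K0*(A*S^2) = (B-A)*A*(A+B)^2 + (247/50)*(1-B^2)*((1/2)*A*(A+B) + (1-A^2))^2"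
    proof -
      have "K0*(A*S^2) = (B-A)*A*S^2 + (247/50)*(1-B^2)*((1/2)*A*S + A*S*Q)^2"
        unfolding K0_def by algebra
      thus ?thesis unfolding AQS by (simp add: S_def)
    qed
    have PP1: "0 \<le> (Lam*S)*(4*(1-A^2)*D + 2*A*S*D - S*(3+A*B)) - 4*D*(K0*(A*S^2))"
      unfolding LamS K0A using poly_P1[of A B] A0 A1 B0 B1 by (simp add: D_def S_def)
    have Lpos: "0 < Lam*S"
    proof -
      have "0 \<le> (247/50)*A*(1-B^2)*(4/5 + 2*Q)" using cA Q0 by simp
      hence "0 < Lam" unfolding Lam_def using S0 by simp
      thus ?thesis using S0 by simp
    qed
    have "(Lam*S)*(4*D*A*S*w) = 4*D*(A*S^2)*(Lam*w)" by algebra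
    also have "\<dots> \<le> 4*D*(A*S^2)*K0" using LK D0 A0 S0 by (intro mult_left_mono) auto
    also have "\<dots> \<le> (Lam*S)*(4*(1-A^2)*D + 2*A*S*D - S*(3+A*B))" using PP1 by (simp add: mult_ac)
    finally have X: "(Lam*S)*(4*D*A*S*w) \<le> (Lam*S)*(4*(1-A^2)*D + 2*A*S*D - S*(3+A*B))" .
    have "4*D*A*S*w \<le> 4*(1-A^2)*D + 2*A*S*D - S*(3+A*B)"
      by (rule mult_left_le_imp_le[OF X Lpos])
    hence Wfin: "S*(3+A*B) \<le> 4*(1-A^2)*D + 2*A*S*D - 4*D*A*S*w" by simp
    have eqU: "D*((1-A^2)/S + A*U) = (4*(1-A^2)*D + 2*A*S*D - 4*D*A*S*w)/(4*S)"
      using S0 by (simp add: Uw field_simps)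
    have e1: "(3 + A*B)/4 = S*(3+A*B)/(4*S)" using S0 by simp
    have "S*(3+A*B)/(4*S) \<le> (4*(1-A^2)*D + 2*A*S*D - 4*D*A*S*w)/(4*S)"
      using Wfin S0 by (intro divide_right_mono) auto
    thus ?thesis unfolding e1[symmetric] eqU[symmetric] .
  qed
  show ?thesis using fid tT key by linarith
qed

lemma swap_facts:
  fixes A B U :: real
  assumes A0: "0 < A" and A1: "A \<le> 1" and B0: "0 < B" and B1: "B \<le> 1"
  shows "MM B A (1-U) = NN A B U" "NN B A (1-U) = MM A B U" "kap B = eps B" "eps A = kap A"
    "LL B A = 1 - RR A B" "GG B A (1-U) = - GG A B U"
proof -
  have kk: "(kap A)^2 = 1 - A^2" using kap_facts[OF A0 A1] by simp
  have ee: "(kap B)^2 = 1 - B^2" using kap_facts[OF B0 B1] by simp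
  show kb: "kap B = eps B" and ea: "eps A = kap A" by (simp_all add: kap_def eps_def)
  have p1: "PP B A - (1 - U) = U + (kap A)^2/(A*(A+B))"
    unfolding PP_def kk frac_helper[OF A0 B0] by simp
  have p2: "1 - U + (kap B)^2/(B*(B+A)) = PP A B - U"
    unfolding PP_def ee frac_helper[OF B0 A0] by simp
  show m: "MM B A (1-U) = NN A B U" unfolding MM_def NN_def using p1 kb by simp
  show n: "NN B A (1-U) = MM A B U" unfolding MM_def NN_def using p2 ea by (simp add: kb[symmetric])
  show "LL B A = 1 - RR A B"
  proof -
    have e0: "0 \<le> eps B" using kap_facts[OF B0 B1] kb by simp
    have "(1 + B*A)/(A*(B+A)) = 1 + (kap A)^2/(A*(A+B))"
      unfolding kk frac_helper[OF A0 B0] ..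
    thus ?thesis unfolding LL_def RR_def kb using e0 by (simp add: field_simps)
  qed
  show "GG B A (1-U) = - GG A B U"
    unfolding GG_def m n by (simp add: algebra_simps cos_diff)
qed

theorem mainTheorem9:
  fixes A B U :: real
  assumes "0 < A" "A \<le> 1" "0 < B" "B \<le> 1"
    and "B \<ge> B0 A"
    and "GG A B U = 0"
    and "LL A B \<le> U" "U \<le> RR A B"
  shows "(A+B)*(1-U) + B * kap A * MM A B U + A * eps B * NN A B U \<ge> sqrt (2*(1 + A*B)) / 2 \<and>
         (A+B)*U + B * kap A * MM A B U + A * eps B * NN A B U \<ge> sqrt (2*(1 + A*B)) / 2"
proof
  show "(A+B)*U + B * kap A * MM A B U + A * eps B * NN A B U \<ge> sqrt (2*(1 + A*B)) / 2"
    using F2[OF assms(1-4) assms(7) assms(6)] .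
next
  have sf1: "MM B A (1-U) = NN A B U" by (rule swap_facts(1)[OF assms(1-4)])
  have sf2: "NN B A (1-U) = MM A B U" by (rule swap_facts(2)[OF assms(1-4)])
  have sf3: "kap B = eps B" by (rule swap_facts(3)[OF assms(1-4)])
  have sf4: "eps A = kap A" by (rule swap_facts(4)[OF assms(1-4)])
  have sf5: "LL B A = 1 - RR A B" by (rule swap_facts(5)[OF assms(1-4)])
  have sf6: "GG B A (1-U) = - GG A B U" by (rule swap_facts(6)[OF assms(1-4)])
  have "LL B A \<le> 1 - U" using sf5 assms(8) by simp
  moreover have "GG B A (1-U) = 0" using sf6 assms(6) by simp
  ultimately have "(B+A)*(1-U) + A * kap B * MM B A (1-U) + B * eps A * NN B A (1-U) \<ge> sqrt (2*(1 + B*A)) / 2"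
    using F2[OF assms(3,4,1,2)] by blast
  thus "(A+B)*(1-U) + B * kap A * MM A B U + A * eps B * NN A B U \<ge> sqrt (2*(1 + A*B)) / 2"
    unfolding sf1 sf2 sf3 sf4 by (simp add: algebra_simps)
qed
end
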